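(* Let $1\le k<n$. The transition matrix $K$ of the Burnside process on $[k]^n$ satisfies $$K(u,v)\ge\frac{1}{(k-1)!\,k^n}\quad\text{for all }u,v\in[k]^n.$$
   Context: $S_k$ acts on $[k]^n$ by $\sigma(u_1,\dots,u_n)=(\sigma(u_1),\dots,\sigma(u_n))$. The Burnside process on $[k]^n$ is the Markov chain which, from $u$, chooses $\sigma$ uniformly among permutations of $[k]$ fixing every value appearing in $u$, then produces $v\in[k]^n$ by choosing each coordinate independently and uniformly among the fixed points of $\sigma$; i.e. $K(u,v)=\sum_{\sigma\in G_u\cap G_v}\frac{1}{|G_u|\,\mathrm{fp}(\sigma)^n}$ with $G_u=\{\sigma:\sigma u=u\}$ and $\mathrm{fp}(\sigma)$ the number of fixed points of $\sigma$. *)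

theory Defs
  imports Complex_Main "HOL-Combinatorics.Permutations"
begin

definition words :: "nat \<Rightarrow> nat \<Rightarrow> (nat \<Rightarrow> nat) set" where
  "words k n = {0..<n} \<rightarrow>\<^sub>E {1..k}"

definition stab :: "nat \<Rightarrow> nat \<Rightarrow> (nat \<Rightarrow> nat) \<Rightarrow> (nat \<Rightarrow> nat) set" where
  "stab k n u = {\<sigma>. \<sigma> permutes {1..k} \<and> (\<forall>i\<in>{0..<n}. \<sigma> (u i) = u i)}"

definition fp :: "nat \<Rightarrow> (nat \<Rightarrow> nat) \<Rightarrow> nat" where
  "fp k \<sigma> = card {x \<in> {1..k}. \<sigma> x = x}"

definition burnside_K :: "nat \<Rightarrow> nat \<Rightarrow> (nat \<Rightarrow> nat) \<Rightarrow> (nat \<Rightarrow> nat) \<Rightarrow> real" where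
  "burnside_K k n u v =
     (\<Sum>\<sigma>\<in>stab k n u \<inter> stab k n v. 1 / (real (card (stab k n u)) * real (fp k \<sigma>) ^ n))"

end

theory Submission
  imports Defs
begin

lemma perm_fix_sub:
  assumes "\<sigma> permutes S" "\<sigma> a = a"
  shows "\<sigma> permutes (S - {a})"
  using assms unfolding permutes_def by auto

theorem lemma4p4:
  fixes k n :: nat and u v :: "nat \<Rightarrow> nat"
  assumes "1 \<le> k" and "k < n"
    and "u \<in> words k n" and "v \<in> words k n"
  shows "burnside_K k n u v \<ge> 1 / (fact (k - 1) * real k ^ n)"
proof -
  let ?a = "u 0"
  have a: "?a \<in> {1..k}" using assms(2,3) unfolding words_def by (auto simp: PiE_def Pi_def)
  have sub1: "stab k n u \<subseteq> {p. p permutes {1..k}}" unfolding stab_def by auto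
  have fin: "finite (stab k n u)"
    by (rule finite_subset[OF sub1]) (simp add: finite_permutations)
  have sub2: "stab k n u \<subseteq> {p. p permutes ({1..k} - {?a})}"
    unfolding stab_def using assms(2) by (auto intro: perm_fix_sub)
  have "card {p. p permutes ({1..k} - {?a})} = fact (k - 1)"
    by (rule card_permutations) (use a in auto)
  hence cardle: "card (stab k n u) \<le> fact (k - 1)"
    using card_mono[OF _ sub2] by (simp add: finite_permutations)
  have idu: "id \<in> stab k n u" and idv: "id \<in> stab k n v"
    unfolding stab_def by (auto simp: permutes_id)
  have cpos: "card (stab k n u) > 0" using fin idu by (auto simp: card_gt_0_iff)
  have fpid: "fp k id = k" unfolding fp_def by (simp del: atLeastAtMost_iff)
  have finI: "finite (stab k n u \<inter> stab k n v)" using fin by simp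
  have "1 / (real (card (stab k n u)) * real (fp k id) ^ n) \<le> burnside_K k n u v"
    unfolding burnside_K_def
    by (rule member_le_sum[OF _ _ finI, where f = "\<lambda>\<sigma>. 1 / (real (card (stab k n u)) * real (fp k \<sigma>) ^ n)"])
       (use idu idv in auto)
  moreover have "1 / (fact (k - 1) * real k ^ n) \<le> 1 / (real (card (stab k n u)) * real (fp k id) ^ n)"
  proof -
    have "real (card (stab k n u)) \<le> fact (k - 1)"
      using cardle by (metis of_nat_fact of_nat_le_iff)
    moreover have "real k ^ n > 0" using assms(1) by simp
    ultimately show ?thesis unfolding fpid using cpos
      by (intro divide_left_mono mult_right_mono mult_pos_pos) auto
  qed
  ultimately show ?thesis by linarith
qed

end
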